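(* Let $m\ge 1$ be an integer and, for integers $n\ge 1$, let $T(m,n)$ be the number of domino tilings of an $m$-by-$n$ rectangle (equivalently, the number of perfect matchings of the $m$-by-$n$ grid graph), with $T(m,0)=1$. Then the sequence $(T(m,n))_{n\ge 1}$ satisfies a linear recurrence $\sum_{k=0}^{d} b_k\,T(m,n+k)=0$ (for all $n\ge 1$) with constant coefficients, $b_0\neq 0$ and $b_d\neq 0$. Extending the sequence to all integers $n$ by running any such recurrence (with $b_0\ne 0$) backwards gives a doubly-infinite sequence $(T(m,n))_{n\in\mathbb Z}$ that does not depend on which such recurrence is used, agrees with $T(m,0)=1$, and satisfies $$T(m,-2-n)=\epsilon_{m,n}\,T(m,n)\quad\text{for all } n\in\mathbb Z,$$ where $\epsilon_{m,n}=-1$ if $m\equiv 2 \pmod 4$ and $n$ is odd, and $\epsilon_{m,n}=+1$ otherwise.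
   Context: A domino tiling of an $m$-by-$n$ rectangle is a covering of it by $1$-by-$2$ and $2$-by-$1$ rectangles with pairwise disjoint interiors. The $m$-by-$n$ grid graph has vertices $(i,j)$, $1\le i\le m$ (rows), $1\le j\le n$ (columns), with edges between $(i,j),(i,j+1)$ (horizontal) and between $(i,j),(i+1,j)$ (vertical). *)

theory Defs
  imports Complex_Main
begin

definition grid_cells :: "nat \<Rightarrow> nat \<Rightarrow> (nat \<times> nat) set" where
  "grid_cells m n = {(i, j). 1 \<le> i \<and> i \<le> m \<and> 1 \<le> j \<and> j \<le> n}"

definition grid_adj :: "nat \<times> nat \<Rightarrow> nat \<times> nat \<Rightarrow> bool" where
  "grid_adj p q \<longleftrightarrow>
     (fst p = fst q \<and> (snd q = snd p + 1 \<or> snd p = snd q + 1)) \<or>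
     (snd p = snd q \<and> (fst q = fst p + 1 \<or> fst p = fst q + 1))"

definition grid_edges :: "nat \<Rightarrow> nat \<Rightarrow> (nat \<times> nat) set set" where
  "grid_edges m n = {{p, q} | p q. p \<in> grid_cells m n \<and> q \<in> grid_cells m n \<and> grid_adj p q}"

definition grid_perfect_matching :: "nat \<Rightarrow> nat \<Rightarrow> (nat \<times> nat) set set \<Rightarrow> bool" where
  "grid_perfect_matching m n M \<longleftrightarrow>
     M \<subseteq> grid_edges m n \<and> (\<forall>v \<in> grid_cells m n. \<exists>!e. e \<in> M \<and> v \<in> e)"

text \<open>T(m,n); note T(m,0) = 1 (the empty matching of the empty graph).\<close>
definition domino_T :: "nat \<Rightarrow> nat \<Rightarrow> nat" where
  "domino_T m n = card {M. grid_perfect_matching m n M}"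

definition eps_sign :: "nat \<Rightarrow> int \<Rightarrow> int" where
  "eps_sign m n = (if m mod 4 = 2 \<and> odd n then -1 else 1)"

end

theory Submission
  imports Defs "Jordan_Normal_Form.Determinant"
begin

definition PMc :: "nat set \<Rightarrow> nat set set set" where
  "PMc Y = {P. (\<forall>e\<in>P. \<exists>i. e = {i, Suc i}) \<and> \<Union>P = Y \<and> (\<forall>e\<in>P. \<forall>e'\<in>P. e \<noteq> e' \<longrightarrow> e \<inter> e' = {})}"

lemma PMc_subset: "PMc Y \<subseteq> Pow (Pow Y)"
  unfolding PMc_def by auto

lemma finite_PMc: "finite Y \<Longrightarrow> finite (PMc Y)"
  using PMc_subset by (meson finite_Pow_iff finite_subset)

lemma PMc_empty: "PMc {} = {{}}"
  unfolding PMc_def by auto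

lemma finite_PMc_elem: "P \<in> PMc Y \<Longrightarrow> finite Y \<Longrightarrow> finite P"
proof -
  assume a: "P \<in> PMc Y" "finite Y"
  have "P \<subseteq> Pow Y" using a(1) PMc_subset by blast
  then show "finite P" using a(2) by (meson finite_Pow_iff finite_subset)
qed

lemma PMc_card: assumes "P \<in> PMc Y" "finite Y" shows "card Y = 2 * card P"
proof -
  have "P \<subseteq> Pow Y" using assms(1) PMc_subset by blast
  then have fin: "finite P" using assms(2) by (meson finite_Pow_iff finite_subset)
  have "card Y = card (\<Union>P)" using assms by (simp add: PMc_def)
  also have "\<dots> = (\<Sum>e\<in>P. card e)"
    using assms fin by (intro card_Union_disjoint) (auto simp: PMc_def pairwise_def disjnt_def intro: finite_subset)
  also have "\<dots> = (\<Sum>e\<in>P. 2)"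
    using assms by (intro sum.cong) (auto simp: PMc_def)
  finally show ?thesis by simp
qed

lemma PMc_even: "P \<in> PMc Y \<Longrightarrow> finite Y \<Longrightarrow> even (card Y)"
  using PMc_card by auto

lemma sum_Pow_alt: assumes "finite R" "R \<noteq> {}"
  shows "(\<Sum>P\<in>Pow R. (-1::int) ^ card P) = 0"
proof -
  obtain a where "a \<in> R" using assms(2) by blast
  define R' where "R' = R - {a}"
  have R: "R = insert a R'" "a \<notin> R'" using \<open>a \<in> R\<close> unfolding R'_def by auto
  have fin: "finite R'" using assms R by auto
  have "Pow R = Pow R' \<union> insert a ` Pow R'" using R by (simp add: Pow_insert)
  moreover have "Pow R' \<inter> insert a ` Pow R' = {}" using R by auto
  moreover have "inj_on (insert a) (Pow R')"
  proof (rule inj_onI)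
    fix x y assume xy: "x \<in> Pow R'" "y \<in> Pow R'" "insert a x = insert a y"
    then have "a \<notin> x" "a \<notin> y" using R by auto
    then show "x = y" using xy(3) by (metis Diff_insert_absorb)
  qed
  ultimately have "(\<Sum>P\<in>Pow R. (-1::int) ^ card P) = (\<Sum>P\<in>Pow R'. (-1::int) ^ card P) + (\<Sum>P\<in>Pow R'. (-1::int) ^ card (insert a P))"
    using fin by (simp add: sum.union_disjoint sum.reindex)
  also have "(\<Sum>P\<in>Pow R'. (-1::int) ^ card (insert a P)) = (\<Sum>P\<in>Pow R'. - ((-1::int) ^ card P))"
  proof (intro sum.cong refl)
    fix P assume "P \<in> Pow R'"
    then have "finite P" "a \<notin> P" using R fin finite_subset by auto
    then show "(-1::int) ^ card (insert a P) = - ((-1::int) ^ card P)" by simp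
  qed
  finally show ?thesis by (simp add: sum_negf)
qed

definition sgnsum :: "nat set \<Rightarrow> int" where
  "sgnsum X = (\<Sum>P\<in>PMc X. (-1) ^ card P)"

lemma signed_identity:
  assumes fin: "finite D" and ne: "D \<noteq> {}"
  shows "(\<Sum>X\<in>Pow D. int (card (PMc (D - X))) * sgnsum X) = 0"
proof -
  have "(\<Sum>X\<in>Pow D. int (card (PMc (D - X))) * sgnsum X)
      = (\<Sum>X\<in>Pow D. \<Sum>QP\<in>PMc (D - X) \<times> PMc X. (-1::int) ^ card (snd QP))"
  proof (intro sum.cong refl)
    fix X assume X: "X \<in> Pow D"
    have f1: "finite (PMc (D - X))" "finite (PMc X)" using fin X finite_PMc finite_subset by auto
    show "int (card (PMc (D - X))) * sgnsum X = (\<Sum>QP\<in>PMc (D - X) \<times> PMc X. (-1::int) ^ card (snd QP))"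
    proof -
      have "(\<Sum>QP\<in>PMc (D - X) \<times> PMc X. (-1::int) ^ card (snd QP)) = (\<Sum>(Q,P)\<in>PMc (D - X) \<times> PMc X. (-1::int) ^ card P)"
        by (simp add: case_prod_beta)
      also have "\<dots> = (\<Sum>Q\<in>PMc (D - X). \<Sum>P\<in>PMc X. (-1::int) ^ card P)"
        by (rule sum.cartesian_product[symmetric])
      also have "\<dots> = int (card (PMc (D - X))) * sgnsum X"
        unfolding sgnsum_def by simp
      finally show ?thesis by simp
    qed
  qed
  also have "\<dots> = (\<Sum>z\<in>Sigma (Pow D) (\<lambda>X. PMc (D - X) \<times> PMc X). (-1::int) ^ card (snd (snd z)))"
    using fin by (subst sum.Sigma) (auto intro: finite_PMc finite_subset simp: case_prod_beta)
  also have "\<dots> = (\<Sum>z\<in>Sigma (PMc D) Pow. (-1::int) ^ card (snd z))"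
  proof (rule sum.reindex_bij_witness[where i = "\<lambda>(R,P). (\<Union>P, (R - P, P))" and j = "\<lambda>(X,Q,P). (Q \<union> P, P)"])
    fix a assume a: "a \<in> Sigma (Pow D) (\<lambda>X. PMc (D - X) \<times> PMc X)"
    then obtain X Q P where aa: "a = (X,Q,P)" "X \<subseteq> D" "Q \<in> PMc (D - X)" "P \<in> PMc X" by auto
    have Q: "\<forall>e\<in>Q. \<exists>i. e = {i, Suc i}" "\<Union>Q = D - X" "\<forall>e\<in>Q. \<forall>e'\<in>Q. e \<noteq> e' \<longrightarrow> e \<inter> e' = {}"
      using aa(3) unfolding PMc_def by auto
    have P: "\<forall>e\<in>P. \<exists>i. e = {i, Suc i}" "\<Union>P = X" "\<forall>e\<in>P. \<forall>e'\<in>P. e \<noteq> e' \<longrightarrow> e \<inter> e' = {}"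
      using aa(4) unfolding PMc_def by auto
    have QP: "Q \<inter> P = {}"
    proof -
      { fix e assume e: "e \<in> Q" "e \<in> P"
        then have "e \<subseteq> D - X" "e \<subseteq> X" using Q(2) P(2) by blast+
        hence "e = {}" by blast
        moreover obtain i where "e = {i, Suc i}" using Q(1) e by blast
        ultimately have False by simp }
      thus ?thesis by blast
    qed
    have UP: "\<Union>P = X" using aa unfolding PMc_def by auto
    show "(case (case a of (X, Q, P) \<Rightarrow> (Q \<union> P, P)) of (R, P) \<Rightarrow> (\<Union> P, R - P, P)) = a"
    proof -
      have "(Q \<union> P) - P = Q" using QP by blast
      thus ?thesis using aa UP by simp
    qed
    have cross: "e \<inter> e' = {}" if "e \<in> Q" "e' \<in> P" for e e'
    proof -
      have "e \<subseteq> D - X" using Q(2) that by blast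
      moreover have "e' \<subseteq> X" using P(2) that by blast
      ultimately show ?thesis by blast
    qed
    have "Q \<union> P \<in> PMc D"
      unfolding PMc_def
    proof (intro CollectI conjI)
      show "\<forall>e\<in>Q \<union> P. \<exists>i. e = {i, Suc i}" using Q(1) P(1) by blast
      show "\<Union>(Q \<union> P) = D" using Q(2) P(2) aa(2) by blast
      show "\<forall>e\<in>Q \<union> P. \<forall>e'\<in>Q \<union> P. e \<noteq> e' \<longrightarrow> e \<inter> e' = {}"
        using Q(3) P(3) cross by (metis Int_commute Un_iff)
    qed
    then show "(case a of (X, Q, P) \<Rightarrow> (Q \<union> P, P)) \<in> Sigma (PMc D) Pow"
      using aa by auto
    show "(-1::int) ^ card (snd (case a of (X, Q, P) \<Rightarrow> (Q \<union> P, P))) = (-1) ^ card (snd (snd a))"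
      using aa by simp
  next
    fix b assume b: "b \<in> Sigma (PMc D) Pow"
    then obtain R P where bb: "b = (R,P)" "R \<in> PMc D" "P \<subseteq> R" by auto
    show "(case (case b of (R, P) \<Rightarrow> (\<Union> P, R - P, P)) of (X, Q, P) \<Rightarrow> (Q \<union> P, P)) = b"
      using bb by auto
    have R: "\<forall>e\<in>R. \<exists>i. e = {i, Suc i}" "\<Union>R = D" "\<forall>e\<in>R. \<forall>e'\<in>R. e \<noteq> e' \<longrightarrow> e \<inter> e' = {}"
      using bb(2) unfolding PMc_def by auto
    have "\<Union>P \<subseteq> D" using R(2) bb(3) by blast
    moreover have "P \<in> PMc (\<Union>P)" using R(1,3) bb(3) unfolding PMc_def by blast
    moreover have "R - P \<in> PMc (D - \<Union>P)"
      unfolding PMc_def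
    proof (intro CollectI conjI)
      show "\<forall>e\<in>R - P. \<exists>i. e = {i, Suc i}" using R(1) by blast
      show "\<forall>e\<in>R - P. \<forall>e'\<in>R - P. e \<noteq> e' \<longrightarrow> e \<inter> e' = {}" using R(3) by blast
      show "\<Union>(R - P) = D - \<Union>P"
      proof
        show "\<Union>(R - P) \<subseteq> D - \<Union>P"
        proof
          fix x assume "x \<in> \<Union>(R - P)"
          then obtain e where e: "e \<in> R" "e \<notin> P" "x \<in> e" by auto
          have "x \<in> D" using e R(2) by blast
          moreover have "x \<notin> e'" if "e' \<in> P" for e'
          proof -
            have "e' \<in> R" "e \<noteq> e'" using that bb(3) e by auto
            hence "e \<inter> e' = {}" using R(3) e(1) by blast
            thus ?thesis using e(3) by blast
          qed
          ultimately show "x \<in> D - \<Union>P" by blast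
        qed
        show "D - \<Union>P \<subseteq> \<Union>(R - P)" using R(2) by blast
      qed
    qed
    ultimately show "(case b of (R, P) \<Rightarrow> (\<Union> P, R - P, P)) \<in> Sigma (Pow D) (\<lambda>X. PMc (D - X) \<times> PMc X)"
      using bb by auto
  qed
  also have "\<dots> = (\<Sum>R\<in>PMc D. \<Sum>P\<in>Pow R. (-1::int) ^ card P)"
    using fin by (subst sum.Sigma) (auto intro: finite_PMc finite_PMc_elem simp: case_prod_beta)
  also have "\<dots> = 0"
  proof (rule sum.neutral, rule ballI)
    fix R assume R: "R \<in> PMc D"
    have "finite R" using finite_PMc_elem[OF R fin] .
    moreover have "R \<noteq> {}" using R ne unfolding PMc_def by auto
    ultimately show "(\<Sum>P\<in>Pow R. (-1::int) ^ card P) = 0" by (rule sum_Pow_alt)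
  qed
  finally show ?thesis .
qed

lemma sgnsum_empty: "sgnsum {} = 1"
  unfolding sgnsum_def PMc_empty by simp

lemma sgnsum_alt: assumes "finite Y" shows "sgnsum Y = (-1) ^ (card Y div 2) * int (card (PMc Y))"
proof -
  have "sgnsum Y = (\<Sum>P\<in>PMc Y. (-1::int) ^ (card Y div 2))"
    unfolding sgnsum_def
  proof (rule sum.cong[OF refl])
    fix P assume "P \<in> PMc Y"
    then have "card Y = 2 * card P" using PMc_card assms by blast
    then show "(-1::int) ^ card P = (-1) ^ (card Y div 2)" by simp
  qed
  then show ?thesis by simp
qed

definition St :: "nat \<Rightarrow> nat set set" where "St m = Pow {1..m}"

lemma finite_St[simp]: "finite (St m)" unfolding St_def by simp

definition Af :: "nat \<Rightarrow> nat set \<Rightarrow> nat set \<Rightarrow> int" where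
  "Af m S T = (if S \<inter> T = {} then int (card (PMc ({1..m} - (S \<union> T)))) else 0)"

definition Bf :: "nat \<Rightarrow> nat set \<Rightarrow> nat set \<Rightarrow> int" where
  "Bf m S T = (if S \<union> T = {1..m} then sgnsum (S \<inter> T) else 0)"

definition mmul :: "nat \<Rightarrow> (nat set \<Rightarrow> nat set \<Rightarrow> int) \<Rightarrow> (nat set \<Rightarrow> nat set \<Rightarrow> int) \<Rightarrow> nat set \<Rightarrow> nat set \<Rightarrow> int" where
  "mmul m X Y = (\<lambda>S U. \<Sum>T\<in>St m. X S T * Y T U)"

definition idm :: "nat set \<Rightarrow> nat set \<Rightarrow> int" where
  "idm S U = (if S = U then 1 else 0)"

fun mpow :: "nat \<Rightarrow> (nat set \<Rightarrow> nat set \<Rightarrow> int) \<Rightarrow> nat \<Rightarrow> nat set \<Rightarrow> nat set \<Rightarrow> int" where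
  "mpow m X 0 = idm"
| "mpow m X (Suc n) = mmul m (mpow m X n) X"

lemma Af_sym: "Af m S T = Af m T S"
  unfolding Af_def by (simp add: Int_commute Un_commute)

lemma Bf_sym: "Bf m S T = Bf m T S"
  unfolding Bf_def by (simp add: Int_commute Un_commute)

lemma AB_id:
  assumes S: "S \<in> St m" and U: "U \<in> St m"
  shows "mmul m (Af m) (Bf m) S U = idm S U"
proof -
  let ?F = "\<lambda>T. Af m S T * Bf m T U"
  have SU: "S \<subseteq> {1..m}" "U \<subseteq> {1..m}" using S U unfolding St_def by auto
  have nz: "S \<inter> T = {} \<and> T \<union> U = {1..m}" if "?F T \<noteq> 0" for T
    using that unfolding Af_def Bf_def by (auto split: if_splits)
  show ?thesis
  proof (cases "S \<subseteq> U")
    case False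
    have F0: "?F T = 0" if "T \<in> St m" for T
    proof (rule ccontr)
      assume "?F T \<noteq> 0"
      then have "S \<inter> T = {}" "T \<union> U = {1..m}" using nz by auto
      then show False using False SU by blast
    qed
    have "mmul m (Af m) (Bf m) S U = 0" unfolding mmul_def by (rule sum.neutral) (use F0 in blast)
    moreover have "S \<noteq> U" using False by auto
    ultimately show ?thesis unfolding idm_def by simp
  next
    case True
    show ?thesis
    proof (cases "S = U")
      case SeqU: True
      let ?T0 = "{1..m} - S"
      have T0: "?T0 \<in> St m" unfolding St_def by auto
      have F0: "?F T = 0" if "T \<in> St m - {?T0}" for T
      proof (rule ccontr)
        assume "?F T \<noteq> 0"
        then have "S \<inter> T = {}" "T \<union> U = {1..m}" using nz by auto
        then have "T = ?T0" using SeqU that unfolding St_def by auto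
        then show False using that by auto
      qed
      have "(\<Sum>T\<in>St m - {?T0}. ?F T) = 0" by (rule sum.neutral) (use F0 in blast)
      then have "mmul m (Af m) (Bf m) S U = ?F ?T0"
        unfolding mmul_def using sum.remove[OF finite_St T0, of ?F] by simp
      also have "\<dots> = 1"
      proof -
        have "S \<inter> ?T0 = {}" by auto
        moreover have "{1..m} - (S \<union> ?T0) = {}" by auto
        moreover have "?T0 \<union> U = {1..m}" using SeqU SU by auto
        moreover have "?T0 \<inter> U = {}" using SeqU by auto
        ultimately show ?thesis unfolding Af_def Bf_def by (simp add: PMc_empty sgnsum_empty Diff_Un)
      qed
      finally show ?thesis using SeqU unfolding idm_def by simp
    next
      case SneU: False
      define D where "D = U - S"
      have Dne: "D \<noteq> {}" using True SneU unfolding D_def by auto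
      have Dfin: "finite D" using SU unfolding D_def by (auto intro: finite_subset)
      define g where "g X = ({1..m} - U) \<union> X" for X
      have ginj: "inj_on g (Pow D)"
      proof (rule inj_onI)
        fix X Y assume "X \<in> Pow D" "Y \<in> Pow D" "g X = g Y"
        then show "X = Y" unfolding g_def D_def by blast
      qed
      have gsub: "g ` Pow D \<subseteq> St m" unfolding g_def St_def D_def using SU by auto
      have F1: "?F T = 0" if "T \<in> St m - g ` Pow D" for T
      proof (rule ccontr)
        assume "?F T \<noteq> 0"
        then have "S \<inter> T = {}" "T \<union> U = {1..m}" using nz by auto
        moreover have "T \<subseteq> {1..m}" using that unfolding St_def by auto
        ultimately have "T = g (T \<inter> U)" "T \<inter> U \<in> Pow D" unfolding g_def D_def using SU by auto
        then show False using that by blast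
      qed
      have "mmul m (Af m) (Bf m) S U = (\<Sum>T\<in>g ` Pow D. ?F T)"
        unfolding mmul_def by (rule sum.mono_neutral_right[OF finite_St gsub]) (use F1 in blast)
      also have "\<dots> = (\<Sum>X\<in>Pow D. ?F (g X))" using sum.reindex[OF ginj, of ?F] by (simp add: comp_def)
      also have "\<dots> = (\<Sum>X\<in>Pow D. int (card (PMc (D - X))) * sgnsum X)"
      proof (rule sum.cong[OF refl])
        fix X assume X: "X \<in> Pow D"
        have "S \<inter> g X = {}" using X True unfolding g_def D_def by auto
        moreover have "{1..m} - (S \<union> g X) = D - X" using X True SU unfolding g_def D_def by auto
        moreover have "g X \<union> U = {1..m}" using X SU unfolding g_def D_def by auto
        moreover have "g X \<inter> U = X" using X unfolding g_def D_def by auto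
        ultimately show "?F (g X) = int (card (PMc (D - X))) * sgnsum X"
          unfolding Af_def Bf_def by simp
      qed
      also have "\<dots> = 0" by (rule signed_identity[OF Dfin Dne])
      finally show ?thesis using SneU unfolding idm_def by simp
    qed
  qed
qed

lemma BA_id:
  assumes S: "S \<in> St m" and U: "U \<in> St m"
  shows "mmul m (Bf m) (Af m) S U = idm S U"
proof -
  have "mmul m (Bf m) (Af m) S U = mmul m (Af m) (Bf m) U S"
    unfolding mmul_def by (intro sum.cong refl) (simp add: Af_sym Bf_sym mult.commute)
  also have "\<dots> = idm U S" using AB_id[OF U S] .
  finally show ?thesis unfolding idm_def by auto
qed

lemma mmul_assoc: "mmul m (mmul m X Y) Z = mmul m X (mmul m Y Z)"
proof (intro ext)
  fix S U
  have "mmul m (mmul m X Y) Z S U = (\<Sum>T\<in>St m. \<Sum>R\<in>St m. X S R * Y R T * Z T U)"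
    unfolding mmul_def by (simp add: sum_distrib_right)
  also have "\<dots> = (\<Sum>R\<in>St m. \<Sum>T\<in>St m. X S R * Y R T * Z T U)" by (rule sum.swap)
  also have "\<dots> = mmul m X (mmul m Y Z) S U"
    unfolding mmul_def by (simp add: sum_distrib_left mult.assoc)
  finally show "mmul m (mmul m X Y) Z S U = mmul m X (mmul m Y Z) S U" .
qed

lemma mmul_idm_right: "U \<in> St m \<Longrightarrow> mmul m X idm S U = X S U"
proof -
  assume U: "U \<in> St m"
  have "mmul m X idm S U = (\<Sum>T\<in>St m. if T = U then X S U else 0)"
    unfolding mmul_def idm_def by (intro sum.cong) auto
  also have "\<dots> = X S U" using U by simp
  finally show ?thesis .
qed

lemma mmul_idm_left: "S \<in> St m \<Longrightarrow> mmul m idm X S U = X S U"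
proof -
  assume S: "S \<in> St m"
  have "mmul m idm X S U = (\<Sum>T\<in>St m. if S = T then X S U else 0)"
    unfolding mmul_def idm_def by (intro sum.cong) auto
  also have "\<dots> = X S U" using S by simp
  finally show ?thesis .
qed

lemma mmul_cong_left: "(\<And>T. T \<in> St m \<Longrightarrow> X S T = X' S T) \<Longrightarrow> mmul m X Y S U = mmul m X' Y S U"
  unfolding mmul_def by (intro sum.cong) auto

lemma mmul_cong_right: "(\<And>T. T \<in> St m \<Longrightarrow> Y T U = Y' T U) \<Longrightarrow> mmul m X Y S U = mmul m X Y' S U"
  unfolding mmul_def by (intro sum.cong) auto

lemma mpow_add: "S \<in> St m \<Longrightarrow> U \<in> St m \<Longrightarrow> mpow m X (a + b) S U = mmul m (mpow m X a) (mpow m X b) S U"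
proof (induction b arbitrary: U)
  case 0
  then show ?case by (simp add: mmul_idm_right)
next
  case (Suc b)
  have "mpow m X (a + Suc b) S U = mmul m (mpow m X (a + b)) X S U" by simp
  also have "\<dots> = mmul m (mmul m (mpow m X a) (mpow m X b)) X S U"
    using Suc.IH Suc.prems(1) by (intro mmul_cong_left) auto
  also have "\<dots> = mmul m (mpow m X a) (mpow m X (Suc b)) S U"
    by (simp add: mmul_assoc)
  finally show ?case .
qed

lemma mpow_Suc_left: "S \<in> St m \<Longrightarrow> U \<in> St m \<Longrightarrow> mpow m X (Suc n) S U = mmul m X (mpow m X n) S U"
proof -
  assume S: "S \<in> St m" and U: "U \<in> St m"
  have "mpow m X (1 + n) S U = mmul m (mpow m X 1) (mpow m X n) S U" using mpow_add[OF S U] .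
  also have "\<dots> = mmul m X (mpow m X n) S U"
    using S by (intro mmul_cong_left) (simp add: mmul_idm_left)
  finally show ?thesis by simp
qed


definition sgn_r :: "nat \<Rightarrow> nat \<Rightarrow> nat \<Rightarrow> int" where
  "sgn_r m n t = (-1) ^ ((t + n * m) div 2 + m * (n * (n + 1) div 2))"

lemma neg1_pow_eq: "even (x + y) \<Longrightarrow> (-1::int) ^ x = (-1) ^ y"
  by (auto simp: minus_one_power_iff)

lemma sign_arith:
  fixes t u w m p r :: nat
  assumes "even (t + p)" "t + u = m + w" "even w"
  shows "even (((t + p) div 2 + r + w div 2) + ((u + (p + m)) div 2 + (r + p + m)))"
proof -
  obtain a where a: "t + p = 2 * a" using assms(1) by blast
  obtain c where c: "w = 2 * c" using assms(3) by blast
  have "u + (p + m) + 2 * t = 2 * (m + c + a)" using a c assms(2) by simp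
  then have "even (u + (p + m))" by (metis dvd_add_times_triv_right_iff dvd_triv_left mult.commute)
  then obtain d where d: "u + (p + m) = 2 * d" by blast
  have dt: "d + t = m + c + a" using d a c assms(2) by simp
  have "(a + r + c) + (d + (r + p + m)) + 2 * t = 2 * (2 * a + c + m + r)" using dt a by simp
  then have "even ((a + r + c) + (d + (r + p + m)))" by (metis dvd_add_times_triv_right_iff dvd_triv_left mult.commute)
  then show ?thesis using a c d by simp
qed

lemma sign_step:
  assumes "even (t + n * m)" "t + u = m + w" "even w"
  shows "sgn_r m n t * (-1) ^ (w div 2) = sgn_r m (Suc n) u"
proof -
  have e2: "Suc n * (Suc n + 1) div 2 = n * (n + 1) div 2 + n + 1"
  proof -
    have "Suc n * (Suc n + 1) = n * (n + 1) + 2 * (n + 1)" by (simp add: algebra_simps)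
    moreover have "(q + 2 * (n + 1)) div 2 = q div 2 + n + 1" for q :: nat by presburger
    ultimately show ?thesis by simp
  qed
  have e3: "m * (Suc n * (Suc n + 1) div 2) = m * (n * (n + 1) div 2) + n * m + m"
    unfolding e2 by (simp add: algebra_simps)
  have E2: "(u + Suc n * m) div 2 + m * (Suc n * (Suc n + 1) div 2)
      = (u + (n * m + m)) div 2 + (m * (n * (n + 1) div 2) + n * m + m)"
    unfolding e3 by (simp add: add.commute add.left_commute)
  have "sgn_r m n t * (-1) ^ (w div 2) = (-1::int) ^ ((t + n * m) div 2 + m * (n * (n + 1) div 2) + w div 2)"
    unfolding sgn_r_def by (simp add: power_add)
  also have "\<dots> = (-1) ^ ((u + (n * m + m)) div 2 + (m * (n * (n + 1) div 2) + n * m + m))"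
    by (rule neg1_pow_eq) (rule sign_arith[OF assms])
  also have "\<dots> = sgn_r m (Suc n) u" unfolding sgn_r_def E2 ..
  finally show ?thesis .
qed

lemma sgn_eps:
  assumes "even (k * m)"
  shows "sgn_r m (k + 2) 0 = eps_sign m (int k)"
proof (cases "even m")
  case True
  then obtain a where a: "m = 2 * a" by blast
  have "sgn_r m (k + 2) 0 = (-1::int) ^ ((k + 2) * a + 2 * (a * ((k + 2) * (k + 2 + 1) div 2)))"
    unfolding sgn_r_def a by (simp add: algebra_simps)
  also have "\<dots> = (-1) ^ ((k + 2) * a)" by (simp add: power_add power_mult)
  also have "\<dots> = (if even ((k + 2) * a) then 1 else -1)" by (simp add: minus_one_power_iff)
  also have "\<dots> = eps_sign m (int k)"
  proof -
    have "m mod 4 = 2 \<longleftrightarrow> odd a" unfolding a by presburger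
    moreover have "odd (int k) \<longleftrightarrow> odd k" by simp
    ultimately show ?thesis unfolding eps_sign_def by auto
  qed
  finally show ?thesis .
next
  case False
  then have "even k" using assms by simp
  then obtain b where b: "k = 2 * b" by blast
  have x: "(2 * b + 2) * (2 * b + 2 + 1) div 2 = (b + 1) * (2 * b + 3)"
  proof -
    have "(2 * b + 2) * (2 * b + 2 + 1) = 2 * ((b + 1) * (2 * b + 3))" by (simp add: algebra_simps)
    then show ?thesis by simp
  qed
  have y: "(2 * b + 2) * m div 2 = (b + 1) * m"
  proof -
    have "(2 * b + 2) * m = 2 * ((b + 1) * m)" by (simp add: algebra_simps)
    then show ?thesis by simp
  qed
  have "sgn_r m (k + 2) 0 = (-1::int) ^ ((b + 1) * m + m * ((b + 1) * (2 * b + 3)))"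
    by (simp only: sgn_r_def b add_0 x y)
  also have "(b + 1) * m + m * ((b + 1) * (2 * b + 3)) = 2 * ((b + 1) * m * (b + 2))"
    by (simp add: algebra_simps)
  also have "(-1::int) ^ (2 * ((b + 1) * m * (b + 2))) = 1" by (simp add: power_mult)
  also have "1 = eps_sign m (int k)"
  proof -
    have "m mod 4 \<noteq> 2" using False by presburger
    then show ?thesis unfolding eps_sign_def by simp
  qed
  finally show ?thesis .
qed

lemma card_m: "card {1..(m::nat)} = m" by simp

lemma St_sub: "T \<in> St m \<Longrightarrow> T \<subseteq> {1..m}" unfolding St_def by auto

lemma Af_nz:
  assumes T: "T \<in> St m" and U: "U \<in> St m" and nz: "Af m T U \<noteq> 0"
  shows "T \<inter> U = {} \<and> even (card T + card U + m)"
proof -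
  have TU: "T \<inter> U = {}" using nz unfolding Af_def by (auto split: if_splits)
  let ?R = "{1..m} - (T \<union> U)"
  have "PMc ?R \<noteq> {}" using nz TU unfolding Af_def by auto
  then obtain P where "P \<in> PMc ?R" by blast
  then have ev: "even (card ?R)" using PMc_even by blast
  have fT: "finite T" "finite U" using St_sub[OF T] St_sub[OF U] by (auto intro: finite_subset)
  have sub: "T \<union> U \<subseteq> {1..m}" using St_sub[OF T] St_sub[OF U] by auto
  have "card ?R = m - card (T \<union> U)" using card_Diff_subset[OF _ sub] fT by simp
  moreover have "card (T \<union> U) = card T + card U" using card_Un_disjoint[OF fT TU] .
  moreover have "card (T \<union> U) \<le> m" using card_mono[OF _ sub] by simp
  ultimately show ?thesis using TU ev by presburger
qed

lemma parity:
  assumes "S \<in> St m"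
  shows "T \<in> St m \<Longrightarrow> mpow m (Af m) n S T \<noteq> 0 \<Longrightarrow> even (card S + card T + n * m)"
proof (induction n arbitrary: T)
  case 0
  then have "S = T" by (simp add: idm_def split: if_splits)
  then show ?case by simp
next
  case (Suc n)
  have "(\<Sum>R\<in>St m. mpow m (Af m) n S R * Af m R T) \<noteq> 0" using Suc.prems by (simp add: mmul_def)
  then obtain R where R: "R \<in> St m" "mpow m (Af m) n S R * Af m R T \<noteq> 0"
    by (meson sum.neutral)
  then have "even (card S + card R + n * m)" using Suc.IH by auto
  moreover have "even (card R + card T + m)" using Af_nz[OF R(1) Suc.prems(1)] R(2) by auto
  ultimately show ?case by simp presburger
qed

lemma B_via_A:
  assumes T: "T \<in> St m" and U: "U \<in> St m"
  shows "Bf m T U = (-1) ^ (card (T \<inter> U) div 2) * Af m ({1..m} - T) ({1..m} - U)"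
proof -
  have sub: "T \<subseteq> {1..m}" "U \<subseteq> {1..m}" using St_sub T U by auto
  have fin: "finite (T \<inter> U)" using sub by (auto intro: finite_subset)
  have c1: "(({1..m} - T) \<inter> ({1..m} - U) = {}) \<longleftrightarrow> T \<union> U = {1..m}" using sub by auto
  have c2: "{1..m} - (({1..m} - T) \<union> ({1..m} - U)) = T \<inter> U" using sub by auto
  show ?thesis unfolding Bf_def Af_def c1 c2 using sgnsum_alt[OF fin] by simp
qed

lemma compl_St: "T \<in> St m \<Longrightarrow> {1..m} - T \<in> St m" unfolding St_def by auto

lemma recip:
  "T \<in> St m \<Longrightarrow> mpow m (Bf m) n {} T = sgn_r m n (card T) * mpow m (Af m) n {1..m} ({1..m} - T)"
proof (induction n arbitrary: T)
  case 0
  have sub: "T \<subseteq> {1..m}" using St_sub 0 by auto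
  show ?case
  proof (cases "T = {}")
    case True then show ?thesis by (simp add: idm_def sgn_r_def)
  next
    case False
    then have "{1..m} \<noteq> {1..m} - T" using sub by auto
    then show ?thesis using False by (auto simp: idm_def)
  qed
next
  case (Suc n U)
  let ?c = "\<lambda>T. {1..m} - T"
  let ?A = "Af m" and ?B = "Bf m"
  have Um: "U \<in> St m" by fact
  have "mpow m ?B (Suc n) {} U = (\<Sum>T\<in>St m. mpow m ?B n {} T * ?B T U)" by (simp add: mmul_def)
  also have "\<dots> = (\<Sum>T\<in>St m. sgn_r m (Suc n) (card U) * (mpow m ?A n {1..m} (?c T) * ?A (?c T) (?c U)))"
  proof (rule sum.cong[OF refl])
    fix T assume T: "T \<in> St m"
    have e: "mpow m ?B n {} T * ?B T U = sgn_r m n (card T) * (-1) ^ (card (T \<inter> U) div 2) * (mpow m ?A n {1..m} (?c T) * ?A (?c T) (?c U))"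
      using Suc.IH[OF T] B_via_A[OF T Um] by (simp add: algebra_simps)
    show "mpow m ?B n {} T * ?B T U = sgn_r m (Suc n) (card U) * (mpow m ?A n {1..m} (?c T) * ?A (?c T) (?c U))"
    proof (cases "mpow m ?A n {1..m} (?c T) * ?A (?c T) (?c U) = 0")
      case True then show ?thesis using e by simp
    next
      case False
      have full: "{1..m} \<in> St m" unfolding St_def by auto
      have cT: "?c T \<in> St m" "?c U \<in> St m" using compl_St T Um by auto
      have subT: "T \<subseteq> {1..m}" "U \<subseteq> {1..m}" using St_sub T Um by auto
      have finT: "finite T" "finite U" using subT by (auto intro: finite_subset)
      have p1: "even (m + card (?c T) + n * m)" using parity[OF full cT(1)] False by auto
      have cardcT: "card (?c T) = m - card T" using card_Diff_subset[OF finT(1) subT(1)] by simp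
      have "card T \<le> m" using card_mono[OF _ subT(1)] by simp
      then have p1': "even (card T + n * m)" using p1 cardcT by presburger
      have anz: "?A (?c T) (?c U) \<noteq> 0" using False by auto
      then have "?c T \<inter> ?c U = {}" unfolding Af_def by (auto split: if_splits)
      then have TU: "T \<union> U = {1..m}" using subT by auto
      have "{1..m} - (?c T \<union> ?c U) = T \<inter> U" using subT by auto
      then have "PMc (T \<inter> U) \<noteq> {}" using anz unfolding Af_def by (auto split: if_splits)
      then obtain P where "P \<in> PMc (T \<inter> U)" by blast
      then have evw: "even (card (T \<inter> U))" using PMc_even finT by blast
      have "card T + card U = card (T \<union> U) + card (T \<inter> U)" using card_Un_Int[OF finT] .
      then have tu: "card T + card U = m + card (T \<inter> U)" using TU by simp
      have "sgn_r m n (card T) * (-1) ^ (card (T \<inter> U) div 2) = sgn_r m (Suc n) (card U)"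
        using sign_step[OF p1' tu evw] .
      then show ?thesis using e by simp
    qed
  qed
  also have "\<dots> = sgn_r m (Suc n) (card U) * (\<Sum>T\<in>St m. mpow m ?A n {1..m} (?c T) * ?A (?c T) (?c U))"
    by (simp add: sum_distrib_left)
  also have "(\<Sum>T\<in>St m. mpow m ?A n {1..m} (?c T) * ?A (?c T) (?c U)) = (\<Sum>T\<in>St m. mpow m ?A n {1..m} T * ?A T (?c U))"
    by (rule sum.reindex_bij_witness[where i = ?c and j = ?c]) (auto simp: St_def)
  also have "\<dots> = mpow m ?A (Suc n) {1..m} (?c U)" by (simp add: mmul_def)
  finally show ?case .
qed

lemma Af_full: "T \<in> St m \<Longrightarrow> Af m T {1..m} = (if T = {} then 1 else 0)"
proof -
  assume T: "T \<in> St m"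
  have "T \<inter> {1..m} = T" using St_sub[OF T] by auto
  then show ?thesis unfolding Af_def by (simp add: PMc_empty)
qed

lemma mmul_A_full_right: "mmul m X (Af m) S {1..m} = X S {}"
proof -
  have "mmul m X (Af m) S {1..m} = (\<Sum>T\<in>St m. if T = {} then X S T else 0)"
    unfolding mmul_def
  proof (rule sum.cong[OF refl])
    fix T assume T: "T \<in> St m"
    show "X S T * Af m T {1..m} = (if T = {} then X S T else 0)" using Af_full[OF T] by simp
  qed
  also have "\<dots> = X S {}" by (simp add: St_def)
  finally show ?thesis .
qed

lemma mmul_A_full_left: "mmul m (Af m) Y {1..m} U = Y {} U"
proof -
  have "mmul m (Af m) Y {1..m} U = (\<Sum>T\<in>St m. if T = {} then Y T U else 0)"
    unfolding mmul_def
  proof (rule sum.cong[OF refl])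
    fix T assume T: "T \<in> St m"
    show "Af m {1..m} T * Y T U = (if T = {} then Y T U else 0)" using Af_full[OF T] Af_sym[of m "{1..m}" T] by simp
  qed
  also have "\<dots> = Y {} U" by (simp add: St_def)
  finally show ?thesis .
qed

lemma corner: "mpow m (Af m) (Suc (Suc n)) {1..m} {1..m} = mpow m (Af m) n {} {}"
proof -
  have full: "{1..m} \<in> St m" "{} \<in> St m" unfolding St_def by auto
  have "mpow m (Af m) (Suc (Suc n)) {1..m} {1..m} = mpow m (Af m) (Suc n) {1..m} {}"
    by (simp only: mpow.simps(2) mmul_A_full_right)
  also have "\<dots> = mmul m (Af m) (mpow m (Af m) n) {1..m} {}" using mpow_Suc_left[OF full] .
  also have "\<dots> = mpow m (Af m) n {} {}" by (rule mmul_A_full_left)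
  finally show ?thesis .
qed


definition hedge :: "nat \<Rightarrow> nat \<Rightarrow> (nat \<times> nat) set" where
  "hedge i j = {(i, j), (i, Suc j)}"
definition vedge :: "nat \<Rightarrow> nat \<Rightarrow> (nat \<times> nat) set" where
  "vedge i j = {(i, j), (Suc i, j)}"

lemma mem_hedge[simp]: "(a, b) \<in> hedge i j \<longleftrightarrow> a = i \<and> (b = j \<or> b = Suc j)"
  unfolding hedge_def by auto
lemma mem_vedge[simp]: "(a, b) \<in> vedge i j \<longleftrightarrow> b = j \<and> (a = i \<or> a = Suc i)"
  unfolding vedge_def by auto
lemma hedge_inj[simp]: "hedge i j = hedge i' j' \<longleftrightarrow> i = i' \<and> j = j'"
  unfolding hedge_def by (auto simp: doubleton_eq_iff)
lemma vedge_inj[simp]: "vedge i j = vedge i' j' \<longleftrightarrow> i = i' \<and> j = j'"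
  unfolding vedge_def by (auto simp: doubleton_eq_iff)
lemma hedge_ne_vedge[simp]: "hedge i j \<noteq> vedge i' j'" "vedge i' j' \<noteq> hedge i j"
  unfolding hedge_def vedge_def by (auto simp: doubleton_eq_iff)
lemma pair_inj[simp]: "({i, Suc i} = {i', Suc i'}) \<longleftrightarrow> i = (i'::nat)"
  by (auto simp: doubleton_eq_iff)

lemma grid_cells_iff[simp]: "(a, b) \<in> grid_cells m n \<longleftrightarrow> 1 \<le> a \<and> a \<le> m \<and> 1 \<le> b \<and> b \<le> n"
  unfolding grid_cells_def by auto

lemma grid_edges_char: "e \<in> grid_edges m n \<longleftrightarrow>
   (\<exists>i j. e = hedge i j \<and> 1 \<le> i \<and> i \<le> m \<and> 1 \<le> j \<and> Suc j \<le> n) \<or>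
   (\<exists>i j. e = vedge i j \<and> 1 \<le> i \<and> Suc i \<le> m \<and> 1 \<le> j \<and> j \<le> n)"
proof
  assume "e \<in> grid_edges m n"
  then obtain a b c d where e: "e = {(a,b),(c,d)}" "(a,b) \<in> grid_cells m n" "(c,d) \<in> grid_cells m n"
    "grid_adj (a,b) (c,d)" unfolding grid_edges_def by auto
  from e(4) consider "a = c" "d = Suc b" | "a = c" "b = Suc d" | "b = d" "c = Suc a" | "b = d" "a = Suc c"
    unfolding grid_adj_def by auto
  then show "(\<exists>i j. e = hedge i j \<and> 1 \<le> i \<and> i \<le> m \<and> 1 \<le> j \<and> Suc j \<le> n) \<or>
   (\<exists>i j. e = vedge i j \<and> 1 \<le> i \<and> Suc i \<le> m \<and> 1 \<le> j \<and> j \<le> n)"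
  proof cases
    case 1
    then have "e = hedge a b" using e(1) by (simp add: hedge_def)
    then show ?thesis using e(2,3) 1 by auto
  next
    case 2
    then have "e = hedge a d" using e(1) by (auto simp: hedge_def)
    then show ?thesis using e(2,3) 2 by auto
  next
    case 3
    then have "e = vedge a b" using e(1) by (simp add: vedge_def)
    then show ?thesis using e(2,3) 3 by auto
  next
    case 4
    then have "e = vedge c b" using e(1) by (auto simp: vedge_def)
    then show ?thesis using e(2,3) 4 by auto
  qed
next
  assume "(\<exists>i j. e = hedge i j \<and> 1 \<le> i \<and> i \<le> m \<and> 1 \<le> j \<and> Suc j \<le> n) \<or>
   (\<exists>i j. e = vedge i j \<and> 1 \<le> i \<and> Suc i \<le> m \<and> 1 \<le> j \<and> j \<le> n)"
  then show "e \<in> grid_edges m n"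
  proof
    assume "\<exists>i j. e = hedge i j \<and> 1 \<le> i \<and> i \<le> m \<and> 1 \<le> j \<and> Suc j \<le> n"
    then obtain i j where "e = hedge i j" "1 \<le> i" "i \<le> m" "1 \<le> j" "Suc j \<le> n" by blast
    then show ?thesis unfolding grid_edges_def hedge_def
      by (intro CollectI exI[of _ "(i,j)"] exI[of _ "(i,Suc j)"]) (auto simp: grid_cells_def grid_adj_def)
  next
    assume "\<exists>i j. e = vedge i j \<and> 1 \<le> i \<and> Suc i \<le> m \<and> 1 \<le> j \<and> j \<le> n"
    then obtain i j where "e = vedge i j" "1 \<le> i" "Suc i \<le> m" "1 \<le> j" "j \<le> n" by blast
    then show ?thesis unfolding grid_edges_def vedge_def
      by (intro CollectI exI[of _ "(i,j)"] exI[of _ "(Suc i,j)"]) (auto simp: grid_cells_def grid_adj_def)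
  qed
qed

lemma finite_grid_edges: "finite (grid_edges m n)"
proof -
  have "grid_edges m n \<subseteq> (\<lambda>(p,q). {p,q}) ` (grid_cells m n \<times> grid_cells m n)"
    unfolding grid_edges_def by auto
  moreover have "finite (grid_cells m n)"
    by (rule finite_subset[of _ "{1..m} \<times> {1..n}"]) (auto simp: grid_cells_def)
  ultimately show ?thesis by (meson finite_SigmaI finite_imageI finite_subset)
qed


definition Hset :: "nat \<Rightarrow> nat set \<Rightarrow> (nat \<times> nat) set set" where
  "Hset n T = (\<lambda>i. hedge i n) ` T"

definition vert :: "nat \<Rightarrow> nat set set \<Rightarrow> (nat \<times> nat) set set" where
  "vert j P = {vedge i j | i. {i, Suc i} \<in> P}"

definition G :: "nat \<Rightarrow> nat \<Rightarrow> nat set \<Rightarrow> (nat \<times> nat) set set set" where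
  "G m n T = {M. M \<subseteq> grid_edges m n \<union> Hset n T \<and> Hset n T \<subseteq> M \<and>
      (\<forall>v\<in>grid_cells m n. \<exists>!e. e \<in> M \<and> v \<in> e) \<and> (n = 0 \<longrightarrow> T = {})}"

lemma uniq_cover: "(\<forall>v\<in>C. \<exists>!e. e \<in> M \<and> v \<in> e) \<Longrightarrow> v \<in> C \<Longrightarrow> e1 \<in> M \<Longrightarrow> v \<in> e1 \<Longrightarrow> e2 \<in> M \<Longrightarrow> v \<in> e2 \<Longrightarrow> e1 = e2"
  by blast

lemma G_0_empty: "G m n {} = {M. grid_perfect_matching m n M}"
  unfolding G_def grid_perfect_matching_def Hset_def by auto

lemma finite_G: "finite T \<Longrightarrow> finite (G m n T)"
proof -
  assume "finite T"
  hence "finite (grid_edges m n \<union> Hset n T)" using finite_grid_edges unfolding Hset_def by auto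
  moreover have "G m n T \<subseteq> Pow (grid_edges m n \<union> Hset n T)" unfolding G_def by auto
  ultimately show ?thesis by (meson finite_Pow_iff finite_subset)
qed

lemma G_zero: "G m 0 T = (if T = {} then {{}} else {})"
proof -
  have "grid_edges m 0 = {}" using grid_edges_char by auto
  moreover have "grid_cells m 0 = {}" unfolding grid_cells_def by auto
  ultimately show ?thesis unfolding G_def Hset_def by auto
qed



lemma edge_cases:
  assumes "e \<in> grid_edges m n \<union> Hset k U"
  obtains (H) i j where "e = hedge i j" "1 \<le> i" "i \<le> m" "1 \<le> j" "Suc j \<le> n"
    | (V) i j where "e = vedge i j" "1 \<le> i" "Suc i \<le> m" "1 \<le> j" "j \<le> n"
    | (X) i where "e = hedge i k" "i \<in> U"
  using assms unfolding Un_iff grid_edges_char Hset_def image_iff by blast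

lemma grid_mono: "e \<in> grid_edges m n \<Longrightarrow> n \<le> n' \<Longrightarrow> e \<in> grid_edges m n'"
  unfolding grid_edges_char by force

context
  fixes m n :: nat and U :: "nat set"
  assumes Um: "U \<subseteq> {1..m}"
begin

definition "Tm M = {i \<in> {1..m}. hedge i n \<in> M}"
definition "Mr M = M \<inter> (grid_edges m n \<union> Hset n (Tm M))"
definition "Pv M = {{i, Suc i} | i. vedge i (Suc n) \<in> M}"
definition "Phi M = (Tm M, Mr M, Pv M)"
definition "Psi z = (case z of (T, M', P) \<Rightarrow> M' \<union> vert (Suc n) P \<union> Hset (Suc n) U)"

definition "Tgt = Sigma {T. T \<subseteq> {1..m} \<and> T \<inter> U = {}} (\<lambda>T. G m n T \<times> PMc ({1..m} - (T \<union> U)))"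

lemma Phi_in:
  assumes M: "M \<in> G m (Suc n) U"
  shows "Phi M \<in> Tgt"
proof -
  have g1: "M \<subseteq> grid_edges m (Suc n) \<union> Hset (Suc n) U" and g2: "Hset (Suc n) U \<subseteq> M"
    and g3: "\<forall>v\<in>grid_cells m (Suc n). \<exists>!e. e \<in> M \<and> v \<in> e"
    using M unfolding G_def by auto
  have hU: "hedge i (Suc n) \<in> M" if "i \<in> U" for i using g2 that unfolding Hset_def by auto
  let ?T = "Tm M"
  have Tsub: "?T \<subseteq> {1..m}" unfolding Tm_def by auto
  have TU: "?T \<inter> U = {}"
  proof (rule ccontr)
    assume "?T \<inter> U \<noteq> {}"
    then obtain i where i: "i \<in> ?T" "i \<in> U" by auto
    have "hedge i n \<in> M" "i \<in> {1..m}" using i unfolding Tm_def by auto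
    moreover have "hedge i (Suc n) \<in> M" using hU i by auto
    ultimately have "hedge i n = hedge i (Suc n)"
      by (intro uniq_cover[OF g3, of "(i, Suc n)"]) auto
    then show False by simp
  qed
  have Mr: "Mr M \<in> G m n ?T"
    unfolding G_def
  proof (intro CollectI conjI)
    show "Mr M \<subseteq> grid_edges m n \<union> Hset n ?T" unfolding Mr_def by auto
    show "Hset n ?T \<subseteq> Mr M" unfolding Mr_def Hset_def Tm_def by auto
    show "n = 0 \<longrightarrow> ?T = {}"
    proof
      assume n0: "n = 0"
      { fix i assume "i \<in> ?T"
        hence "hedge i 0 \<in> M" using n0 unfolding Tm_def by auto
        hence "hedge i 0 \<in> grid_edges m (Suc n) \<union> Hset (Suc n) U" using g1 by auto
        hence False using n0 by (cases rule: edge_cases) auto }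
      thus "?T = {}" by auto
    qed
    show "\<forall>v\<in>grid_cells m n. \<exists>!e. e \<in> Mr M \<and> v \<in> e"
    proof
      fix v assume v: "v \<in> grid_cells m n"
      obtain a b where ab: "v = (a, b)" by force
      have vs: "v \<in> grid_cells m (Suc n)" using v ab by auto
      then obtain e where e: "e \<in> M" "v \<in> e" using g3 by blast
      have "e \<in> grid_edges m (Suc n) \<union> Hset (Suc n) U" using g1 e by auto
      then have "e \<in> Mr M"
      proof (cases rule: edge_cases)
        case (H i j)
        show ?thesis
        proof (cases "j = n")
          case True
          then have "i \<in> ?T" using H e unfolding Tm_def by auto
          then show ?thesis using e H True unfolding Mr_def Hset_def by auto
        next
          case False
          then have "e \<in> grid_edges m n" using H unfolding grid_edges_char by auto
          then show ?thesis using e unfolding Mr_def by auto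
        qed
      next
        case (V i j)
        then have "j = b" using e ab by auto
        then have "e \<in> grid_edges m n" using V v ab unfolding grid_edges_char by auto
        then show ?thesis using e unfolding Mr_def by auto
      next
        case (X i)
        then show ?thesis using e v ab by auto
      qed
      moreover have "e' = e" if "e' \<in> Mr M" "v \<in> e'" for e'
        using uniq_cover[OF g3 vs] e that unfolding Mr_def by blast
      ultimately show "\<exists>!e. e \<in> Mr M \<and> v \<in> e" using e by blast
    qed
  qed
  have vgrid: "1 \<le> i \<and> Suc i \<le> m" if "vedge i (Suc n) \<in> M" for i
  proof -
    have "vedge i (Suc n) \<in> grid_edges m (Suc n) \<union> Hset (Suc n) U" using g1 that by auto
    then show ?thesis by (cases rule: edge_cases) auto
  qed
  have Pv: "Pv M \<in> PMc ({1..m} - (?T \<union> U))"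
    unfolding PMc_def
  proof (intro CollectI conjI)
    show "\<forall>e\<in>Pv M. \<exists>i. e = {i, Suc i}" unfolding Pv_def by auto
    show "\<forall>e\<in>Pv M. \<forall>e'\<in>Pv M. e \<noteq> e' \<longrightarrow> e \<inter> e' = {}"
    proof (intro ballI impI)
      fix e e' assume ee: "e \<in> Pv M" "e' \<in> Pv M" "e \<noteq> e'"
      then obtain i i' where ii: "e = {i, Suc i}" "vedge i (Suc n) \<in> M" "e' = {i', Suc i'}" "vedge i' (Suc n) \<in> M"
        unfolding Pv_def by auto
      show "e \<inter> e' = {}"
      proof (rule ccontr)
        assume "e \<inter> e' \<noteq> {}"
        then obtain x where x: "x \<in> e" "x \<in> e'" by auto
        have "x \<in> {1..m}" using x ii vgrid[OF ii(2)] vgrid[OF ii(4)] by auto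
        then have "vedge i (Suc n) = vedge i' (Suc n)"
          using x ii by (intro uniq_cover[OF g3, of "(x, Suc n)"]) auto
        then show False using ee ii by simp
      qed
    qed
    show "\<Union>(Pv M) = {1..m} - (?T \<union> U)"
    proof
      show "\<Union>(Pv M) \<subseteq> {1..m} - (?T \<union> U)"
      proof
        fix x assume "x \<in> \<Union>(Pv M)"
        then obtain i where i: "x \<in> {i, Suc i}" "vedge i (Suc n) \<in> M" unfolding Pv_def by auto
        have xm: "x \<in> {1..m}" using i vgrid[OF i(2)] by auto
        have "x \<notin> ?T"
        proof
          assume "x \<in> ?T"
          then have "hedge x n \<in> M" unfolding Tm_def by auto
          then have "hedge x n = vedge i (Suc n)"
            using i xm by (intro uniq_cover[OF g3, of "(x, Suc n)"]) auto
          then show False by simp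
        qed
        moreover have "x \<notin> U"
        proof
          assume "x \<in> U"
          then have "hedge x (Suc n) \<in> M" using hU by auto
          then have "hedge x (Suc n) = vedge i (Suc n)"
            using i xm by (intro uniq_cover[OF g3, of "(x, Suc n)"]) auto
          then show False by simp
        qed
        ultimately show "x \<in> {1..m} - (?T \<union> U)" using xm by auto
      qed
      show "{1..m} - (?T \<union> U) \<subseteq> \<Union>(Pv M)"
      proof
        fix x assume x: "x \<in> {1..m} - (?T \<union> U)"
        then have "(x, Suc n) \<in> grid_cells m (Suc n)" by auto
        then obtain e where e: "e \<in> M" "(x, Suc n) \<in> e" using g3 by blast
        have "e \<in> grid_edges m (Suc n) \<union> Hset (Suc n) U" using g1 e by auto
        then show "x \<in> \<Union>(Pv M)"
        proof (cases rule: edge_cases)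
          case (H i j)
          then have "i = x" "j = n" using e by auto
          then have "x \<in> ?T" using H e x unfolding Tm_def by auto
          then show ?thesis using x by auto
        next
          case (V i j)
          then have "j = Suc n" "x = i \<or> x = Suc i" using e by auto
          then show ?thesis using V e unfolding Pv_def by auto
        next
          case (X i)
          then have "x \<in> U" using e by auto
          then show ?thesis using x by auto
        qed
      qed
    qed
  qed
  have TT: "Tm M \<in> {T. T \<subseteq> {1..m} \<and> T \<inter> U = {}}" using Tsub TU by (simp only: mem_Collect_eq)
  have "(Mr M, Pv M) \<in> G m n (Tm M) \<times> PMc ({1..m} - (Tm M \<union> U))" using Mr Pv by (rule SigmaI)
  with TT have "(Tm M, Mr M, Pv M) \<in> Tgt" unfolding Tgt_def by (rule SigmaI)
  then show ?thesis unfolding Phi_def .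
qed

lemma Psi_Phi:
  assumes M: "M \<in> G m (Suc n) U"
  shows "Psi (Phi M) = M"
proof -
  have g1: "M \<subseteq> grid_edges m (Suc n) \<union> Hset (Suc n) U" and g2: "Hset (Suc n) U \<subseteq> M"
    using M unfolding G_def by auto
  have v: "vert (Suc n) (Pv M) = {e \<in> M. \<exists>i. e = vedge i (Suc n)}"
    unfolding vert_def Pv_def by auto
  have "M \<subseteq> Mr M \<union> vert (Suc n) (Pv M) \<union> Hset (Suc n) U"
  proof
    fix e assume e: "e \<in> M"
    then have "e \<in> grid_edges m (Suc n) \<union> Hset (Suc n) U" using g1 by auto
    then show "e \<in> Mr M \<union> vert (Suc n) (Pv M) \<union> Hset (Suc n) U"
    proof (cases rule: edge_cases)
      case (H i j)
      show ?thesis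
      proof (cases "j = n")
        case True
        then have "i \<in> Tm M" using H e unfolding Tm_def by auto
        then show ?thesis using e H True unfolding Mr_def Hset_def by auto
      next
        case False
        then have "e \<in> grid_edges m n" using H unfolding grid_edges_char by auto
        then show ?thesis using e unfolding Mr_def by auto
      qed
    next
      case (V i j)
      show ?thesis
      proof (cases "j = Suc n")
        case True
        then have "e \<in> vert (Suc n) (Pv M)" unfolding v using e V by auto
        then show ?thesis by blast
      next
        case False
        then have "e \<in> grid_edges m n" using V unfolding grid_edges_char by auto
        then show ?thesis using e unfolding Mr_def by auto
      qed
    next
      case (X i)
      then show ?thesis unfolding Hset_def by auto
    qed
  qed
  moreover have "Mr M \<union> vert (Suc n) (Pv M) \<union> Hset (Suc n) U \<subseteq> M"
    using g2 v unfolding Mr_def by auto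
  ultimately show ?thesis unfolding Psi_def Phi_def by auto
qed


lemma Psi_in:
  assumes z: "z \<in> Tgt"
  shows "Psi z \<in> G m (Suc n) U"
proof -
  obtain T M' P where zz: "z = (T, M', P)" "T \<subseteq> {1..m}" "T \<inter> U = {}" "M' \<in> G m n T"
    "P \<in> PMc ({1..m} - (T \<union> U))" using z unfolding Tgt_def by auto
  have m1: "M' \<subseteq> grid_edges m n \<union> Hset n T" and m2: "Hset n T \<subseteq> M'"
    and m3: "\<forall>v\<in>grid_cells m n. \<exists>!e. e \<in> M' \<and> v \<in> e" and m4: "n = 0 \<longrightarrow> T = {}"
    using zz(4) unfolding G_def by auto
  have p1: "\<forall>e\<in>P. \<exists>i. e = {i, Suc i}" and p2: "\<Union>P = {1..m} - (T \<union> U)"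
    and p3: "\<forall>e\<in>P. \<forall>e'\<in>P. e \<noteq> e' \<longrightarrow> e \<inter> e' = {}"
    using zz(5) unfolding PMc_def by auto
  let ?M = "M' \<union> vert (Suc n) P \<union> Hset (Suc n) U"
  have PsiM: "Psi z = ?M" unfolding Psi_def zz by simp
  have Pm: "1 \<le> i \<and> Suc i \<le> m \<and> i \<notin> T \<and> i \<notin> U \<and> Suc i \<notin> T \<and> Suc i \<notin> U" if "{i, Suc i} \<in> P" for i
  proof -
    have "i \<in> \<Union>P" "Suc i \<in> \<Union>P" using that by auto
    then show ?thesis unfolding p2 by auto
  qed
  have M'col: "b \<le> n \<or> (b = Suc n \<and> e = hedge a n \<and> a \<in> T)" if "e \<in> M'" "(a, b) \<in> e" for e a b
  proof -
    have "e \<in> grid_edges m n \<union> Hset n T" using m1 that by auto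
    then show ?thesis by (cases rule: edge_cases) (use that in auto)
  qed
  have sub: "?M \<subseteq> grid_edges m (Suc n) \<union> Hset (Suc n) U"
  proof
    fix e assume e: "e \<in> ?M"
    show "e \<in> grid_edges m (Suc n) \<union> Hset (Suc n) U"
    proof (cases "e \<in> M'")
      case True
      then have "e \<in> grid_edges m n \<union> Hset n T" using m1 by auto
      then show ?thesis
      proof (cases rule: edge_cases)
        case (H i j)
        then have "e \<in> grid_edges m n" unfolding grid_edges_char by blast
        then show ?thesis using grid_mono[of e m n "Suc n"] by auto
      next
        case (V i j)
        then have "e \<in> grid_edges m n" unfolding grid_edges_char by blast
        then show ?thesis using grid_mono[of e m n "Suc n"] by auto
      next
        case (X i)
        then have "n \<noteq> 0" "i \<in> {1..m}" using m4 zz(2) by auto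
        then have "e \<in> grid_edges m (Suc n)" using X unfolding grid_edges_char by auto
        then show ?thesis by auto
      qed
    next
      case False
      then have "e \<in> vert (Suc n) P \<or> e \<in> Hset (Suc n) U" using e by auto
      then show ?thesis
      proof
        assume "e \<in> vert (Suc n) P"
        then obtain i where i: "e = vedge i (Suc n)" "{i, Suc i} \<in> P" unfolding vert_def by auto
        then have "e \<in> grid_edges m (Suc n)" using Pm[OF i(2)] unfolding grid_edges_char by auto
        then show ?thesis by auto
      qed auto
    qed
  qed
  have cover: "\<exists>!e. e \<in> ?M \<and> v \<in> e" if v: "v \<in> grid_cells m (Suc n)" for v
  proof -
    obtain a b where ab: "v = (a, b)" by force
    have am: "a \<in> {1..m}" "1 \<le> b" "b \<le> Suc n" using v ab by auto
    show ?thesis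
    proof (cases "b \<le> n")
      case True
      then have vc: "v \<in> grid_cells m n" using v ab by auto
      then obtain e where e: "e \<in> M'" "v \<in> e" using m3 by blast
      have "e' = e" if h: "e' \<in> ?M" "v \<in> e'" for e'
      proof -
        have "e' \<in> M'"
          using h True ab unfolding vert_def Hset_def by auto
        then show ?thesis using uniq_cover[OF m3 vc] e h by blast
      qed
      then show ?thesis using e by blast
    next
      case False
      then have b: "b = Suc n" using am by auto
      have "a \<in> T \<or> a \<in> U \<or> a \<in> \<Union>P" using p2 am by auto
      then show ?thesis
      proof (elim disjE)
        assume aT: "a \<in> T"
        have e0: "hedge a n \<in> ?M" using m2 aT unfolding Hset_def by auto
        have "e' = hedge a n" if h: "e' \<in> ?M" "v \<in> e'" for e'
        proof -
          consider "e' \<in> M'" | "e' \<in> vert (Suc n) P" | "e' \<in> Hset (Suc n) U" using h(1) by auto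
          then show ?thesis
          proof cases
            case 1 then show ?thesis using M'col[OF 1, of a b] h ab b by auto
          next
            case 2
            then obtain i where i: "e' = vedge i (Suc n)" "{i, Suc i} \<in> P" unfolding vert_def by auto
            then show ?thesis using Pm[OF i(2)] h ab aT by auto
          next
            case 3 then show ?thesis using h ab aT zz(3) unfolding Hset_def by auto
          qed
        qed
        then show ?thesis using e0 ab b by auto
      next
        assume aU: "a \<in> U"
        have e0: "hedge a (Suc n) \<in> ?M" using aU unfolding Hset_def by auto
        have "e' = hedge a (Suc n)" if h: "e' \<in> ?M" "v \<in> e'" for e'
        proof -
          consider "e' \<in> M'" | "e' \<in> vert (Suc n) P" | "e' \<in> Hset (Suc n) U" using h(1) by auto
          then show ?thesis
          proof cases
            case 1 then show ?thesis using M'col[OF 1, of a b] h ab b aU zz(3) by auto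
          next
            case 2
            then obtain i where i: "e' = vedge i (Suc n)" "{i, Suc i} \<in> P" unfolding vert_def by auto
            then show ?thesis using Pm[OF i(2)] h ab aU by auto
          next
            case 3 then show ?thesis using h ab unfolding Hset_def by auto
          qed
        qed
        then show ?thesis using e0 ab b by auto
      next
        assume "a \<in> \<Union>P"
        then obtain p where p: "p \<in> P" "a \<in> p" by auto
        then obtain i where i: "p = {i, Suc i}" using p1 by blast
        have aR: "a \<notin> T" "a \<notin> U" using p p2 by auto
        have e0: "vedge i (Suc n) \<in> ?M" using p i unfolding vert_def by auto
        have e0v: "v \<in> vedge i (Suc n)" using ab b p i by auto
        have "e' = vedge i (Suc n)" if h: "e' \<in> ?M" "v \<in> e'" for e'
        proof -
          consider "e' \<in> M'" | "e' \<in> vert (Suc n) P" | "e' \<in> Hset (Suc n) U" using h(1) by auto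
          then show ?thesis
          proof cases
            case 1 then show ?thesis using M'col[OF 1, of a b] h ab b aR by auto
          next
            case 2
            then obtain i' where i': "e' = vedge i' (Suc n)" "{i', Suc i'} \<in> P" unfolding vert_def by auto
            have "(a, b) \<in> vedge i' (Suc n)" using h(2) i'(1) ab by simp
            then have "a = i' \<or> a = Suc i'" by simp
            then have "a \<in> {i', Suc i'}" by blast
            have "{i', Suc i'} = p"
            proof (rule ccontr)
              assume ne: "{i', Suc i'} \<noteq> p"
              have "{i', Suc i'} \<inter> p = {}" using p3[rule_format, OF i'(2) p(1) ne] .
              then show False using \<open>a \<in> {i', Suc i'}\<close> p(2) by blast
            qed
            then show ?thesis using i i' by simp
          next
            case 3 then show ?thesis using h ab aR unfolding Hset_def by auto
          qed
        qed
        then show ?thesis using e0 e0v by auto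
      qed
    qed
  qed
  have "?M \<in> G m (Suc n) U"
    unfolding G_def using sub cover by auto
  then show ?thesis using PsiM by simp
qed

lemma Phi_Psi:
  assumes z: "z \<in> Tgt"
  shows "Phi (Psi z) = z"
proof -
  obtain T M' P where zz: "z = (T, M', P)" "T \<subseteq> {1..m}" "T \<inter> U = {}" "M' \<in> G m n T"
    "P \<in> PMc ({1..m} - (T \<union> U))" using z unfolding Tgt_def by auto
  have m1: "M' \<subseteq> grid_edges m n \<union> Hset n T" and m2: "Hset n T \<subseteq> M'"
    using zz(4) unfolding G_def by auto
  have p1: "\<forall>e\<in>P. \<exists>i. e = {i, Suc i}" using zz(5) unfolding PMc_def by auto
  let ?M = "M' \<union> vert (Suc n) P \<union> Hset (Suc n) U"
  have PsiM: "Psi z = ?M" unfolding Psi_def zz by simp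
  have hM': "hedge i n \<in> M' \<longleftrightarrow> i \<in> T" for i
  proof
    assume "hedge i n \<in> M'"
    then have "hedge i n \<in> grid_edges m n \<union> Hset n T" using m1 by auto
    then show "i \<in> T" by (cases rule: edge_cases) auto
  next
    assume "i \<in> T" then show "hedge i n \<in> M'" using m2 unfolding Hset_def by auto
  qed
  have vM': "vedge i (Suc n) \<notin> M'" for i
  proof
    assume "vedge i (Suc n) \<in> M'"
    then have "vedge i (Suc n) \<in> grid_edges m n \<union> Hset n T" using m1 by auto
    then show False by (cases rule: edge_cases) auto
  qed
  have T: "Tm ?M = T"
    unfolding Tm_def using hM' zz(2) unfolding vert_def Hset_def by auto
  have Mr: "Mr ?M = M'"
  proof -
    have "vert (Suc n) P \<inter> (grid_edges m n \<union> Hset n T) = {}"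
      unfolding vert_def by (auto simp: grid_edges_char Hset_def)
    moreover have "Hset (Suc n) U \<inter> (grid_edges m n \<union> Hset n T) = {}"
      unfolding Hset_def by (auto simp: grid_edges_char)
    ultimately show ?thesis unfolding Mr_def T using m1 by blast
  qed
  have Pv: "Pv ?M = P"
  proof -
    have vi: "vedge i (Suc n) \<in> ?M \<longleftrightarrow> {i, Suc i} \<in> P" for i
      using vM' unfolding vert_def Hset_def by auto
    have "Pv ?M = {{i, Suc i} | i. {i, Suc i} \<in> P}" unfolding Pv_def by (simp only: vi)
    also have "\<dots> = P"
    proof
      show "{{i, Suc i} | i. {i, Suc i} \<in> P} \<subseteq> P" by blast
      show "P \<subseteq> {{i, Suc i} | i. {i, Suc i} \<in> P}"
      proof
        fix e assume e: "e \<in> P"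
        then obtain i where "e = {i, Suc i}" using p1 by blast
        then show "e \<in> {{i, Suc i} | i. {i, Suc i} \<in> P}" using e by blast
      qed
    qed
    finally show ?thesis .
  qed
  have "Phi ?M = (T, M', P)" unfolding Phi_def T Mr Pv by simp
  then show ?thesis using PsiM zz(1) by simp
qed

lemma G_bij: "bij_betw Phi (G m (Suc n) U) Tgt"
  by (rule bij_betw_byWitness[where f' = Psi]) (auto simp: Psi_Phi Phi_Psi Phi_in Psi_in)

lemma card_G_Suc: "card (G m (Suc n) U) =
   (\<Sum>T\<in>{T. T \<subseteq> {1..m} \<and> T \<inter> U = {}}. card (G m n T) * card (PMc ({1..m} - (T \<union> U))))"
proof -
  have "card (G m (Suc n) U) = card Tgt" using bij_betw_same_card[OF G_bij] .
  also have "\<dots> = (\<Sum>T\<in>{T. T \<subseteq> {1..m} \<and> T \<inter> U = {}}. card (G m n T \<times> PMc ({1..m} - (T \<union> U))))"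
    unfolding Tgt_def
    by (rule card_SigmaI) (auto intro!: finite_G finite_PMc finite_cartesian_product intro: finite_subset)
  also have "\<dots> = (\<Sum>T\<in>{T. T \<subseteq> {1..m} \<and> T \<inter> U = {}}. card (G m n T) * card (PMc ({1..m} - (T \<union> U))))"
    by (simp add: card_cartesian_product)
  finally show ?thesis .
qed

end


lemma int_dependency:
  fixes I :: "'b set" and w :: "nat \<Rightarrow> 'b \<Rightarrow> int"
  assumes fin: "finite I" and cardI: "card I = N"
  shows "\<exists>c::nat \<Rightarrow> int. (\<exists>k\<le>N. c k \<noteq> 0) \<and> (\<forall>s\<in>I. (\<Sum>k=0..N. c k * w k s) = 0)"
proof -
  obtain h where h: "bij_betw h {0..<N} I" using ex_bij_betw_nat_finite[OF fin] cardI by auto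
  define C :: "int mat" where "C = mat (Suc N) (Suc N) (\<lambda>(i,k). if i < N then w k (h i) else 0)"
  have Cc: "C \<in> carrier_mat (Suc N) (Suc N)" unfolding C_def by auto
  have "C = mat\<^sub>r (Suc N) (Suc N) (\<lambda>i. if i = N then 0\<^sub>v (Suc N) else vec (Suc N) (\<lambda>k. w k (h i)))"
    unfolding C_def by (rule eq_matI) auto
  hence "det C = 0" by (simp add: det_row_0)
  then obtain v where v: "v \<in> carrier_vec (Suc N)" "v \<noteq> 0\<^sub>v (Suc N)" "C *\<^sub>v v = 0\<^sub>v (Suc N)"
    using det_0_iff_vec_prod_zero[OF Cc] by auto
  from v(1,2) obtain k where k: "k < Suc N" "v $ k \<noteq> 0" by (auto simp: vec_eq_iff)
  show ?thesis
  proof (intro exI[of _ "\<lambda>k. v $ k"] conjI)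
    show "\<exists>k\<le>N. v $ k \<noteq> 0" using k less_Suc_eq_le by blast
    show "\<forall>s\<in>I. (\<Sum>k=0..N. v $ k * w k s) = 0"
    proof
      fix s assume "s \<in> I"
      then obtain i where i: "i < N" "s = h i" using h by (auto simp: bij_betw_def)
      have "(C *\<^sub>v v) $ i = 0" using v(3) i by simp
      hence "row C i \<bullet> v = 0" using Cc i by simp
      moreover have "row C i \<bullet> v = (\<Sum>k\<in>{0..<Suc N}. w k (h i) * v $ k)"
        unfolding scalar_prod_def using v(1) i by (auto simp: C_def intro!: sum.cong)
      moreover have "{0..<Suc N} = {0..N}" by auto
      ultimately show "(\<Sum>k=0..N. v $ k * w k s) = 0" using i by (simp add: mult.commute)
    qed
  qed
qed


lemma card_G_mpow:
  assumes "T \<in> St m"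
  shows "int (card (G m n T)) = mpow m (Af m) n {} T"
  using assms
proof (induction n arbitrary: T)
  case 0
  then show ?case by (simp add: G_zero idm_def)
next
  case (Suc n U)
  have Um: "U \<subseteq> {1..m}" using Suc.prems St_sub by auto
  let ?I = "{T. T \<subseteq> {1..m} \<and> T \<inter> U = {}}"
  have "int (card (G m (Suc n) U)) = (\<Sum>T\<in>?I. int (card (G m n T)) * int (card (PMc ({1..m} - (T \<union> U)))))"
    unfolding card_G_Suc[OF Um] by simp
  also have "\<dots> = (\<Sum>T\<in>?I. mpow m (Af m) n {} T * Af m T U)"
  proof (rule sum.cong[OF refl])
    fix T assume T: "T \<in> ?I"
    then have "T \<in> St m" unfolding St_def by auto
    then show "int (card (G m n T)) * int (card (PMc ({1..m} - (T \<union> U)))) = mpow m (Af m) n {} T * Af m T U"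
      using Suc.IH T unfolding Af_def by auto
  qed
  also have "\<dots> = (\<Sum>T\<in>St m. mpow m (Af m) n {} T * Af m T U)"
  proof (rule sum.mono_neutral_left)
    show "finite (St m)" by simp
    show "?I \<subseteq> St m" unfolding St_def by auto
    show "\<forall>i\<in>St m - ?I. mpow m (Af m) n {} i * Af m i U = 0"
      unfolding St_def Af_def by auto
  qed
  also have "\<dots> = mpow m (Af m) (Suc n) {} U" by (simp add: mmul_def)
  finally show ?case .
qed

lemma domino_mpow: "int (domino_T m n) = mpow m (Af m) n {} {}"
proof -
  have "{} \<in> St m" unfolding St_def by auto
  then show ?thesis using card_G_mpow[of "{}" m n] unfolding domino_T_def G_0_empty by simp
qed

theorem mainTheorem1:
  fixes m :: nat
  assumes "m \<ge> 1"
  shows "(\<exists>(d::nat) (b::nat \<Rightarrow> int). b 0 \<noteq> 0 \<and> b d \<noteq> 0 \<and>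
            (\<forall>n::nat. n \<ge> 1 \<longrightarrow> (\<Sum>k=0..d. b k * int (domino_T m (n + k))) = 0))
       \<and> (\<exists>U :: int \<Rightarrow> int.
            U 0 = 1 \<and>
            (\<forall>n::nat. n \<ge> 1 \<longrightarrow> U (int n) = int (domino_T m n)) \<and>
            (\<forall>(d::nat) (b::nat \<Rightarrow> complex).
               b 0 \<noteq> 0 \<and> b d \<noteq> 0 \<and>
               (\<forall>n::nat. n \<ge> 1 \<longrightarrow> (\<Sum>k=0..d. b k * of_nat (domino_T m (n + k))) = 0)
               \<longrightarrow> (\<forall>n::int. (\<Sum>k=0..d. b k * of_int (U (n + int k))) = 0)) \<and>
            (\<forall>n::int. U (-2 - n) = eps_sign m n * U n))"
proof -
  let ?A = "Af m" and ?B = "Bf m"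
  define Mz where "Mz n = (if 0 \<le> n then mpow m ?A (nat n) else mpow m ?B (nat (- n)))" for n :: int
  define U where "U n = Mz n {} {}" for n
  have e0: "{} \<in> St m" by (simp add: St_def)
  have full: "{1..m} \<in> St m" by (simp add: St_def)
  have UA: "U (int k) = mpow m ?A k {} {}" for k unfolding U_def Mz_def by simp
  have UB: "U (- int k) = mpow m ?B k {} {}" for k
  proof (cases "k = 0")
    case True then show ?thesis by (simp add: U_def Mz_def)
  next
    case False
    then have "\<not> 0 \<le> - int k" by simp
    then show ?thesis by (simp add: U_def Mz_def)
  qed
  have UT: "U (int k) = int (domino_T m k)" for k using UA domino_mpow by simp
  have step: "Mz (n + 1) S V = mmul m (Mz n) ?A S V" if S: "S \<in> St m" and V: "V \<in> St m" for n S V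
  proof (cases "0 \<le> n")
    case True
    then have "nat (n + 1) = Suc (nat n)" by simp
    then show ?thesis unfolding Mz_def using True by simp
  next
    case False
    define j where "j = nat (- (n + 1))"
    have n1: "nat (- n) = Suc j" using False unfolding j_def by simp
    have "Mz (n + 1) = mpow m ?B j"
    proof (cases "n + 1 = 0")
      case True
      then show ?thesis unfolding Mz_def j_def by simp
    next
      case False2: False
      then show ?thesis unfolding Mz_def j_def using False by simp
    qed
    moreover have "Mz n = mmul m (mpow m ?B j) ?B" unfolding Mz_def using False n1 by simp
    moreover have "mmul m (mmul m (mpow m ?B j) ?B) ?A S V = mpow m ?B j S V"
    proof -
      have "mmul m (mmul m (mpow m ?B j) ?B) ?A S V = mmul m (mpow m ?B j) (mmul m ?B ?A) S V"
        by (simp add: mmul_assoc)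
      also have "\<dots> = mmul m (mpow m ?B j) idm S V"
        using V by (intro mmul_cong_right) (simp add: BA_id)
      also have "\<dots> = mpow m ?B j S V" using mmul_idm_right[OF V] .
      finally show ?thesis .
    qed
    ultimately show ?thesis by simp
  qed
  have shift: "Mz (n + int k) S V = mmul m (Mz n) (mpow m ?A k) S V" if S: "S \<in> St m" and V: "V \<in> St m" for n k S V
    using V
  proof (induction k arbitrary: V)
    case 0
    then show ?case by (simp add: mmul_idm_right)
  next
    case (Suc k V)
    have eq: "n + int (Suc k) = (n + int k) + 1" by simp
    have "Mz (n + int (Suc k)) S V = Mz ((n + int k) + 1) S V" by (simp only: eq)
    also have "\<dots> = mmul m (Mz (n + int k)) ?A S V" using step[OF S Suc.prems] .
    also have "\<dots> = mmul m (mmul m (Mz n) (mpow m ?A k)) ?A S V"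
      using Suc.IH by (intro mmul_cong_left) auto
    also have "\<dots> = mmul m (Mz n) (mpow m ?A (Suc k)) S V" by (simp add: mmul_assoc)
    finally show ?case .
  qed
  define N where "N = card (St m)"
  obtain c :: "nat \<Rightarrow> int" where c1: "\<exists>k\<le>N. c k \<noteq> 0"
    and c2: "\<forall>s\<in>St m. (\<Sum>k=0..N. c k * mpow m ?A k s {}) = 0"
    using int_dependency[of "St m" N "\<lambda>k s. mpow m ?A k s {}"] unfolding N_def by auto
  have rec_all: "(\<Sum>k=0..N. c k * U (n + int k)) = 0" for n
  proof -
    have "(\<Sum>k=0..N. c k * U (n + int k)) = (\<Sum>k=0..N. c k * (\<Sum>s\<in>St m. Mz n {} s * mpow m ?A k s {}))"
      unfolding U_def using shift[OF e0 e0] by (simp add: mmul_def)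
    also have "\<dots> = (\<Sum>k=0..N. \<Sum>s\<in>St m. c k * (Mz n {} s * mpow m ?A k s {}))"
      by (simp only: sum_distrib_left)
    also have "\<dots> = (\<Sum>s\<in>St m. \<Sum>k=0..N. c k * (Mz n {} s * mpow m ?A k s {}))"
      by (rule sum.swap)
    also have "\<dots> = (\<Sum>s\<in>St m. Mz n {} s * (\<Sum>k=0..N. c k * mpow m ?A k s {}))"
      by (simp only: sum_distrib_left mult.left_commute)
    also have "\<dots> = 0" using c2 by simp
    finally show ?thesis .
  qed
  define K where "K = {k. k \<le> N \<and> c k \<noteq> 0}"
  have Kfin: "finite K" unfolding K_def by auto
  have Kne: "K \<noteq> {}" using c1 unfolding K_def by auto
  define j where "j = Min K"
  define D where "D = Max K"
  have jK: "j \<in> K" and DK: "D \<in> K" unfolding j_def D_def using Kfin Kne by auto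
  have jD: "j \<le> D" unfolding j_def D_def using Kfin Kne by auto
  have DN: "D \<le> N" using DK unfolding K_def by auto
  have c0: "c k = 0" if "k \<le> N" "k < j \<or> D < k" for k
  proof (rule ccontr)
    assume "c k \<noteq> 0"
    then have "k \<in> K" using that unfolding K_def by auto
    then show False using that Kfin unfolding j_def D_def
      by (meson Max_ge Min_le leD)
  qed
  define d where "d = D - j"
  define b where "b k = c (k + j)" for k
  have b0: "b 0 \<noteq> 0" using jK unfolding b_def K_def by auto
  have bd: "b d \<noteq> 0" using DK jD unfolding b_def d_def K_def by auto
  have rec_b: "(\<Sum>k=0..d. b k * U (n + int k)) = 0" for n
  proof -
    have "(\<Sum>k=0..d. b k * U (n + int k)) = (\<Sum>k=0..d. c (k + j) * U ((n - int j) + int (k + j)))"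
      unfolding b_def by (intro sum.cong refl) simp
    also have "\<dots> = (\<Sum>k=0+j..d+j. c k * U ((n - int j) + int k))"
      by (rule sum.shift_bounds_cl_nat_ivl[symmetric])
    also have "\<dots> = (\<Sum>k=0..N. c k * U ((n - int j) + int k))"
    proof (rule sum.mono_neutral_left)
      show "finite {0..N}" by simp
      show "{0 + j..d + j} \<subseteq> {0..N}" using jD DN unfolding d_def by auto
      show "\<forall>i\<in>{0..N} - {0 + j..d + j}. c i * U (n - int j + int i) = 0"
        using c0 jD unfolding d_def by auto
    qed
    also have "\<dots> = 0" by (rule rec_all)
    finally show ?thesis .
  qed
  show ?thesis
  proof (intro conjI exI[of _ d] exI[of _ b] exI[of _ U] allI impI)
    show "b 0 \<noteq> 0" by (rule b0)
    show "b d \<noteq> 0" by (rule bd)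
    fix n :: nat
    assume "1 \<le> n"
    show "(\<Sum>k=0..d. b k * int (domino_T m (n + k))) = 0"
      using rec_b[of "int n"] by (simp add: UT[symmetric] add.commute)
  next
    show "U 0 = 1" using UA[of 0] by (simp add: idm_def)
  next
    fix n :: nat assume "1 \<le> n"
    show "U (int n) = int (domino_T m n)" by (rule UT)
  next
    fix d' :: nat and b' :: "nat \<Rightarrow> complex" and n :: int
    assume H: "b' 0 \<noteq> 0 \<and> b' d' \<noteq> 0 \<and> (\<forall>n::nat. n \<ge> 1 \<longrightarrow> (\<Sum>k=0..d'. b' k * of_nat (domino_T m (n + k))) = 0)"
    define v where "v n = (\<Sum>k=0..d'. b' k * of_int (U (n + int k)))" for n
    have v_rec: "(\<Sum>k=0..d. of_int (b k) * v (n + int k)) = 0" for n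
    proof -
      have "(\<Sum>k=0..d. of_int (b k) * v (n + int k)) = (\<Sum>k=0..d. \<Sum>k'=0..d'. of_int (b k) * (b' k' * of_int (U (n + int k + int k'))))"
        unfolding v_def by (simp only: sum_distrib_left)
      also have "\<dots> = (\<Sum>k'=0..d'. \<Sum>k=0..d. of_int (b k) * (b' k' * of_int (U (n + int k + int k'))))"
        by (rule sum.swap)
      also have "\<dots> = (\<Sum>k'=0..d'. b' k' * (\<Sum>k=0..d. of_int (b k * U ((n + int k') + int k))))"
      proof (rule sum.cong[OF refl])
        fix k' show "(\<Sum>k=0..d. of_int (b k) * (b' k' * of_int (U (n + int k + int k')))) = b' k' * (\<Sum>k=0..d. of_int (b k * U ((n + int k') + int k)))"
          unfolding sum_distrib_left by (intro sum.cong refl) (simp add: ac_simps)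
      qed
      also have "\<dots> = (\<Sum>k'=0..d'. b' k' * of_int (\<Sum>k=0..d. b k * U ((n + int k') + int k)))"
        by (simp only: of_int_sum)
      also have "\<dots> = 0" using rec_b by simp
      finally show ?thesis .
    qed
    have v_pos: "v n = 0" if "n \<ge> 1" for n
    proof -
      define k where "k = nat n"
      have k: "n = int k" "k \<ge> 1" using that unfolding k_def by auto
      have "v n = (\<Sum>i=0..d'. b' i * of_nat (domino_T m (k + i)))"
        unfolding v_def k(1)
      proof (rule sum.cong[OF refl])
        fix i
        have "U (int k + int i) = int (domino_T m (k + i))" using UT[of "k + i"] by simp
        then show "b' i * of_int (U (int k + int i)) = b' i * of_nat (domino_T m (k + i))" by simp
      qed
      also have "\<dots> = 0" using H k(2) by blast
      finally show ?thesis .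
    qed
    have down: "\<forall>n. n \<ge> 1 - int t \<longrightarrow> v n = 0" for t :: nat
    proof (induction t)
      case 0
      then show ?case using v_pos by simp
    next
      case (Suc t)
      show ?case
      proof (intro allI impI)
        fix n :: int assume n: "n \<ge> 1 - int (Suc t)"
        show "v n = 0"
        proof (cases "n \<ge> 1 - int t")
          case True then show ?thesis using Suc.IH by blast
        next
          case False
          have "0 = (\<Sum>k=0..d. of_int (b k) * v (n + int k))" using v_rec by simp
          also have "\<dots> = of_int (b 0) * v n + (\<Sum>k=Suc 0..d. of_int (b k) * v (n + int k))"
            by (simp add: sum.atLeast_Suc_atMost)
          also have "(\<Sum>k=Suc 0..d. of_int (b k) * v (n + int k)) = 0"
            using Suc.IH n False by (intro sum.neutral) auto
          finally have "of_int (b 0) * v n = 0" by simp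
          then show ?thesis using b0 by simp
        qed
      qed
    qed
    show "(\<Sum>k=0..d'. b' k * of_int (U (n + int k))) = 0"
      using down[of "nat (1 - n)"] unfolding v_def by auto
  next
    have P: "U (-2 - int k) = eps_sign m (int k) * U (int k)" for k
    proof -
      have m2: "-2 - int k = - int (k + 2)" by simp
      have "U (-2 - int k) = mpow m ?B (k + 2) {} {}"
        unfolding m2 by (rule UB)
      also have "\<dots> = sgn_r m (k + 2) 0 * mpow m ?A (k + 2) {1..m} {1..m}"
        using recip[OF e0, of "k + 2"] by simp
      also have "\<dots> = sgn_r m (k + 2) 0 * mpow m ?A k {} {}"
      proof -
        have "k + 2 = Suc (Suc k)" by simp
        then have "mpow m ?A (k + 2) {1..m} {1..m} = mpow m ?A k {} {}"
          using corner[of m k] by (simp only:)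
        then show ?thesis by (simp only:)
      qed
      finally have X: "U (-2 - int k) = sgn_r m (k + 2) 0 * mpow m ?A k {} {}" .
      show ?thesis
      proof (cases "mpow m ?A k {} {} = 0")
        case True then show ?thesis using X UA by simp
      next
        case False
        then have "even (k * m)" using parity[OF e0 e0, of k] by simp
        then show ?thesis using X UA sgn_eps by simp
      qed
    qed
    have Um1: "U (-1) = 0"
    proof -
      have "U (-1) = mpow m ?B 1 {} {}" using UB[of 1] by simp
      also have "\<dots> = ?B {} {}" using mmul_idm_left[OF e0] by simp
      also have "\<dots> = 0" unfolding Bf_def using assms by auto
      finally show ?thesis .
    qed
    fix n :: int
    show "U (-2 - n) = eps_sign m n * U n"
    proof (cases "n \<ge> 0")
      case True
      then show ?thesis using P[of "nat n"] by simp
    next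
      case False
      show ?thesis
      proof (cases "n = -1")
        case True then show ?thesis using Um1 by simp
      next
        case False2: False
        define k where "k = nat (-2 - n)"
        have nk: "n = -2 - int k" using False False2 unfolding k_def by simp
        have "odd n \<longleftrightarrow> odd (int k)" unfolding nk by presburger
        then have ek: "eps_sign m n = eps_sign m (int k)" unfolding eps_sign_def by simp
        have sq: "eps_sign m (int k) * eps_sign m (int k) = 1" unfolding eps_sign_def by simp
        have a: "-2 - n = int k" using nk by simp
        have Un: "U n = eps_sign m (int k) * U (int k)" using P[of k] nk by simp
        have "eps_sign m n * U n = (eps_sign m (int k) * eps_sign m (int k)) * U (int k)"
          unfolding Un ek by (simp only: mult.assoc)
        also have "\<dots> = U (int k)" unfolding sq by simp
        finally show ?thesis unfolding a by simp
      qed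
    qed
  qed
qed

end
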